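(* Consider smoothed X3C-$k$ or smoothed SC-$k$ on a collection $\mathcal C=\{C_1,\dots,C_n\}$, where each set weight $w_i$ is drawn independently from a distribution with density $f_i:[0,1]\to[0,\phi]$. Then the expected maximum number of iterations of local search (over all initial feasible solutions and all improving sequences) is $O(3^kn^{k+2}\phi)$, with an absolute hidden constant.
   Context: X3C-$k$ (Exact Cover by 3-Sets): given a finite set $\mathcal B$ with $|\mathcal B|=3q$ and a collection $\mathcal C=\{C_1,\dots,C_n\}$ of 3-element subsets of $\mathcal B$ with weights $w_i$, a feasible solution is $S\subseteq\mathcal C$ with $|S|=q$ and $\bigcup_{C_i\in S}C_i=\mathcal B$; its weight $\sum_{C_i\in S}w_i$ is to be maximized; neighbours of $S$ are exact covers obtained by adding or removing at most $k$ sets in total. SC-$k$ (Set Cover): given a collection $\mathcal C=\{C_1,\dots,C_n\}$ of subsets of $\mathcal B$ with weights $w_i$, a feasible solution is $S\subseteq\mathcal C$ with $\bigcup_{C_i\in S}C_i=\mathcal B$; its cost $\sum_{C_i\in S}w_i$ is to be minimized; neighbours are covers obtained by changing membership of at most $k$ sets. A solution is a feasible solution with no strictly better neighbour; local search repeatedly moves to a strictly better neighbour. *)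

theory Defs
  imports "HOL-Probability.Probability"
begin

text \<open>Solutions are represented as sets of indices S \<subseteq> {..<n} into the collection C.\<close>

definition symdiff :: "'a set \<Rightarrow> 'a set \<Rightarrow> 'a set" where
  "symdiff A B = (A - B) \<union> (B - A)"

definition improving_seq ::
  "(nat set \<Rightarrow> bool) \<Rightarrow> (nat set \<Rightarrow> nat set \<Rightarrow> bool) \<Rightarrow> nat \<Rightarrow> nat set list \<Rightarrow> bool" where
  "improving_seq feas better k xs \<longleftrightarrow>
     xs \<noteq> [] \<and> (\<forall>S\<in>set xs. feas S) \<and>
     (\<forall>i. Suc i < length xs \<longrightarrow>
        card (symdiff (xs ! i) (xs ! Suc i)) \<le> k \<and> better (xs ! Suc i) (xs ! i))"

definition max_iterations ::
  "(nat set \<Rightarrow> bool) \<Rightarrow> (nat set \<Rightarrow> nat set \<Rightarrow> bool) \<Rightarrow> nat \<Rightarrow> ennreal" where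
  "max_iterations feas better k =
     (SUP xs \<in> Collect (improving_seq feas better k). of_nat (length xs - 1))"

definition x3c_feasible :: "'a set \<Rightarrow> (nat \<Rightarrow> 'a set) \<Rightarrow> nat \<Rightarrow> nat \<Rightarrow> nat set \<Rightarrow> bool" where
  "x3c_feasible B C n q S \<longleftrightarrow> S \<subseteq> {..<n} \<and> card S = q \<and> (\<Union>i\<in>S. C i) = B"

definition x3c_better :: "(nat \<Rightarrow> real) \<Rightarrow> nat set \<Rightarrow> nat set \<Rightarrow> bool" where
  "x3c_better w T S \<longleftrightarrow> sum w T > sum w S"

definition sc_feasible :: "'a set \<Rightarrow> (nat \<Rightarrow> 'a set) \<Rightarrow> nat \<Rightarrow> nat set \<Rightarrow> bool" where
  "sc_feasible B C n S \<longleftrightarrow> S \<subseteq> {..<n} \<and> (\<Union>i\<in>S. C i) = B"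

definition sc_better :: "(nat \<Rightarrow> real) \<Rightarrow> nat set \<Rightarrow> nat set \<Rightarrow> bool" where
  "sc_better w T S \<longleftrightarrow> sum w T < sum w S"

definition bounded_density :: "real \<Rightarrow> (real \<Rightarrow> real) \<Rightarrow> bool" where
  "bounded_density \<phi> g \<longleftrightarrow> g \<in> borel_measurable borel \<and>
     (\<forall>x. 0 \<le> g x \<and> g x \<le> \<phi>) \<and> (\<forall>x. x \<notin> {0..1} \<longrightarrow> g x = 0) \<and>
     (\<integral>\<^sup>+ x. ennreal (g x) \<partial>lborel) = 1"

definition smoothed_weights :: "nat \<Rightarrow> (nat \<Rightarrow> real \<Rightarrow> real) \<Rightarrow> (nat \<Rightarrow> real) measure" where
  "smoothed_weights n f = (\<Pi>\<^sub>M i\<in>{..<n}. density lborel (\<lambda>x. ennreal (f i x)))"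

end

theory Submission
  imports Defs
begin

lemma bd_meas: "bounded_density \<phi> g \<Longrightarrow> (\<lambda>x. ennreal (g x)) \<in> borel_measurable lborel"
  unfolding bounded_density_def by (simp add: measurable_lborel1)

lemma bd_prob: "bounded_density \<phi> g \<Longrightarrow> prob_space (density lborel (\<lambda>x. ennreal (g x)))"
  apply (rule prob_spaceI)
  apply (subst emeasure_density)
  using bd_meas apply blast
  apply simp
  apply (simp add: bounded_density_def)
  done

lemma bd_phi: assumes "bounded_density \<phi> g" shows "1 \<le> \<phi>"
proof -
  have "(1::ennreal) = (\<integral>\<^sup>+ x. ennreal (g x) \<partial>lborel)" using assms by (simp add: bounded_density_def)
  also have "\<dots> \<le> (\<integral>\<^sup>+ x. ennreal \<phi> * indicator {0..1::real} x \<partial>lborel)"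
  proof (rule nn_integral_mono)
    fix x :: real show "ennreal (g x) \<le> ennreal \<phi> * indicator {0..1} x"
    using assms unfolding bounded_density_def
    by (auto split: split_indicator intro: ennreal_leI)
  qed
  also have "\<dots> = ennreal \<phi>" by (subst nn_integral_cmult_indicator) auto
  finally show ?thesis
    by (cases "\<phi> \<ge> 0") (auto simp: ennreal_le_iff ennreal_neg)
qed

lemma dens_interval:
  assumes "bounded_density \<phi> g" "0 \<le> \<epsilon>"
  shows "emeasure (density lborel (\<lambda>x. ennreal (g x))) {a..a+\<epsilon>} \<le> ennreal (\<phi> * \<epsilon>)"
proof -
  have "emeasure (density lborel (\<lambda>x. ennreal (g x))) {a..a+\<epsilon>}
     = (\<integral>\<^sup>+ x. ennreal (g x) * indicator {a..a+\<epsilon>} x \<partial>lborel)"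
    using bd_meas[OF assms(1)] by (subst emeasure_density) auto
  also have "\<dots> \<le> (\<integral>\<^sup>+ x. ennreal \<phi> * indicator {a..a+\<epsilon>} x \<partial>lborel)"
  proof (rule nn_integral_mono)
    fix x :: real show "ennreal (g x) * indicator {a..a+\<epsilon>} x \<le> ennreal \<phi> * indicator {a..a+\<epsilon>} x"
    using assms unfolding bounded_density_def
    by (auto split: split_indicator intro: ennreal_leI)
  qed
  also have "\<dots> = ennreal \<phi> * ennreal \<epsilon>" using assms(2) by (subst nn_integral_cmult_indicator) auto
  also have "\<dots> = ennreal (\<phi> * \<epsilon>)" using bd_phi[OF assms(1)] assms(2) by (simp add: ennreal_mult)
  finally show ?thesis .
qed

lemma sum_upd: "finite A \<Longrightarrow> sum (x(i:=y)) A = (if i \<in> A then y else 0) + sum (x(i:=0)) A"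
proof (cases "i \<in> A")
  case True
  assume "finite A"
  then have "sum (x(i:=y)) A = y + sum (x(i:=y)) (A - {i})" "sum (x(i:=0)) A = 0 + sum (x(i:=0)) (A - {i})"
    using True by (simp_all add: sum.remove)
  moreover have "sum (x(i:=y)) (A - {i}) = sum (x(i:=0)) (A - {i})" by (intro sum.cong) auto
  ultimately show ?thesis using True by simp
next
  case False
  then have "sum (x(i:=y)) A = sum (x(i:=0)) A" by (intro sum.cong) auto
  then show ?thesis using False by simp
qed

definition Mfam :: "nat \<Rightarrow> (nat \<Rightarrow> real \<Rightarrow> real) \<Rightarrow> nat \<Rightarrow> real measure" where
  "Mfam n f i = (if i < n then density lborel (\<lambda>x. ennreal (f i x)) else count_space {undefined})"

lemma Mfam_prob: "\<forall>i<n. bounded_density \<phi> (f i) \<Longrightarrow> prob_space (Mfam n f i)"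
  unfolding Mfam_def by (auto intro: bd_prob prob_spaceI)

lemma SW_eq: "smoothed_weights n f = PiM {..<n} (Mfam n f)"
  unfolding smoothed_weights_def Mfam_def by (intro PiM_cong) auto

lemma comp_meas: "i < n \<Longrightarrow> (\<lambda>w. w i) \<in> borel_measurable (smoothed_weights n f)"
  unfolding SW_eq
  by (rule measurable_PiM_component_rev[where f="\<lambda>x. x"]) (auto simp: Mfam_def)

lemma sum_meas: "P \<subseteq> {..<n} \<Longrightarrow> (\<lambda>w. sum w P) \<in> borel_measurable (smoothed_weights n f)"
  apply (rule borel_measurable_sum)
  using comp_meas by blast

lemma ev_sets:
  assumes "P \<subseteq> {..<n}" "Q \<subseteq> {..<n}"
  shows "{w \<in> space (smoothed_weights n f). 0 < sum w P - sum w Q \<and> sum w P - sum w Q \<le> \<epsilon>}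
     \<in> sets (smoothed_weights n f)"
proof -
  have m: "(\<lambda>w. sum w P - sum w Q) \<in> borel_measurable (smoothed_weights n f)"
    using sum_meas[OF assms(1)] sum_meas[OF assms(2)] by measurable
  show ?thesis using m by measurable
qed

lemma event_bound:
  assumes bd: "\<forall>i<n. bounded_density \<phi> (f i)" and hP: "P \<subseteq> {..<n}" and hQ: "Q \<subseteq> {..<n}"
    and eps: "0 \<le> \<epsilon>"
  shows "emeasure (smoothed_weights n f)
     {w \<in> space (smoothed_weights n f). 0 < sum w P - sum w Q \<and> sum w P - sum w Q \<le> \<epsilon>}
     \<le> ennreal (\<phi> * \<epsilon>)" (is "emeasure _ ?E \<le> _")
proof (cases "P = Q")
  case True
  then have "?E = {}" by auto
  then show ?thesis by (metis emeasure_empty zero_le)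
next
  case False
  then obtain i0 where i0: "i0 \<in> (P - Q) \<union> (Q - P)" by blast
  then have i0n: "i0 < n" using hP hQ by auto
  have phi: "1 \<le> \<phi>" using bd i0n bd_phi by blast
  define M where "M = Mfam n f"
  interpret MP: prob_space "M i" for i using Mfam_prob[OF bd] unfolding M_def by blast
  interpret product_prob_space M "{..<n}" by unfold_locales
  define I where "I = {..<n} - {i0}"
  have ins: "{..<n} = insert i0 I" using i0n unfolding I_def by auto
  have finI: "finite I" "i0 \<notin> I" unfolding I_def by auto
  have SW: "smoothed_weights n f = PiM (insert i0 I) M" unfolding M_def SW_eq ins ..
  have Esets: "?E \<in> sets (smoothed_weights n f)" using ev_sets[OF hP hQ] .
  have finP: "finite P" "finite Q" using hP hQ finite_subset by auto
  have "emeasure (smoothed_weights n f) ?E = (\<integral>\<^sup>+ w. indicator ?E w \<partial>smoothed_weights n f)"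
    using Esets by simp
  also have "\<dots> = (\<integral>\<^sup>+ x. (\<integral>\<^sup>+ y. indicator ?E (x(i0 := y)) \<partial>(M i0)) \<partial>(PiM I M))"
    unfolding SW
    apply (rule product_nn_integral_insert[OF finI])
    using Esets unfolding SW by simp
  also have "\<dots> \<le> (\<integral>\<^sup>+ x. ennreal (\<phi> * \<epsilon>) \<partial>(PiM I M))"
  proof (rule nn_integral_mono)
    fix x :: "nat \<Rightarrow> real"
    define C where "C = sum (x(i0:=0)) P - sum (x(i0:=0)) Q"
    define a where "a = (if i0 \<in> P then - C else C - \<epsilon>)"
    have F: "sum (x(i0:=y)) P - sum (x(i0:=y)) Q = (if i0 \<in> P then y else - y) + C" for y
      using sum_upd[OF finP(1), of x i0 y] sum_upd[OF finP(2), of x i0 y] i0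
      unfolding C_def by auto
    have "indicator ?E (x(i0 := y)) \<le> (indicator {a..a+\<epsilon>} y :: ennreal)" for y
    proof (cases "x(i0:=y) \<in> ?E")
      case True
      have ind1: "indicator ?E (x(i0 := y)) = (1::ennreal)" using True by (rule indicator_simps(1))
      from True have "0 < sum (x(i0:=y)) P - sum (x(i0:=y)) Q" "sum (x(i0:=y)) P - sum (x(i0:=y)) Q \<le> \<epsilon>"
        by auto
      then have "y \<in> {a..a+\<epsilon>}" unfolding F a_def by (auto split: if_splits)
      then show ?thesis by (simp only: ind1) simp
    qed simp
    then have "(\<integral>\<^sup>+ y. indicator ?E (x(i0 := y)) \<partial>(M i0)) \<le> (\<integral>\<^sup>+ y. indicator {a..a+\<epsilon>} y \<partial>(M i0))"
      by (intro nn_integral_mono) auto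
    also have "\<dots> = emeasure (M i0) {a..a+\<epsilon>}"
      by (rule nn_integral_indicator) (simp add: M_def Mfam_def i0n)
    also have "\<dots> \<le> ennreal (\<phi> * \<epsilon>)"
      unfolding M_def Mfam_def using i0n bd dens_interval eps by simp
    finally show "(\<integral>\<^sup>+ y. indicator ?E (x(i0 := y)) \<partial>(M i0)) \<le> ennreal (\<phi> * \<epsilon>)" .
  qed
  also have "\<dots> = ennreal (\<phi> * \<epsilon>)"
  proof -
    interpret PI: prob_space "PiM I M" by (rule prob_space_PiM) (rule MP.prob_space_axioms)
    show ?thesis by (simp add: PI.emeasure_space_1)
  qed
  finally show ?thesis .
qed

lemma chain_ge:
  fixes h :: "nat set \<Rightarrow> real"
  assumes "\<forall>t. Suc t < length xs \<longrightarrow> h (xs!t) + \<epsilon> \<le> h (xs!Suc t)"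
  shows "t < length xs \<Longrightarrow> h (xs!0) + real t * \<epsilon> \<le> h (xs!t)"
proof (induction t)
  case 0 then show ?case by simp
next
  case (Suc t)
  then have "h (xs!0) + real t * \<epsilon> \<le> h (xs!t)" by simp
  moreover have "h (xs!t) + \<epsilon> \<le> h (xs!Suc t)" using assms Suc.prems by blast
  ultimately show ?case by (simp add: algebra_simps)
qed

lemma chain_strict:
  fixes h :: "nat set \<Rightarrow> real"
  assumes "\<forall>t. Suc t < length xs \<longrightarrow> h (xs!t) < h (xs!Suc t)"
  shows "j < length xs \<Longrightarrow> i < j \<Longrightarrow> h (xs!i) < h (xs!j)"
proof (induction j)
  case 0 then show ?case by simp
next
  case (Suc j)
  have "h (xs!j) < h (xs!Suc j)" using assms Suc.prems by blast
  moreover have "i < j \<Longrightarrow> h (xs!i) < h (xs!j)" using Suc by simp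
  ultimately show ?case using Suc.prems by (cases "i = j") auto
qed

lemma steps_bound:
  fixes xs :: "nat set list" and h :: "nat set \<Rightarrow> real" and Bd :: "real \<Rightarrow> bool"
  assumes sub: "\<forall>S\<in>set xs. S \<subseteq> {..<n}"
    and inc: "\<forall>t. Suc t < length xs \<longrightarrow> h (xs!t) < h (xs!Suc t)"
    and bad: "\<forall>t \<epsilon>. Suc t < length xs \<longrightarrow> h (xs!Suc t) - h (xs!t) \<le> \<epsilon> \<longrightarrow> Bd \<epsilon>"
    and range: "\<forall>S\<in>set xs. \<forall>T\<in>set xs. h T - h S \<le> real n"
  shows "real (length xs - 1) \<le> 2 * real n + (\<Sum>j\<in>{1..n}. real n * 2^(j+1) * (if Bd (1/2^j) then 1 else 0))"
proof -
  define m where "m = length xs - 1"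
  have key: "real m * \<epsilon> \<le> real n" if e: "0 < \<epsilon>" "\<not> Bd \<epsilon>" for \<epsilon>
  proof (cases "xs = []")
    case True then show ?thesis by (simp add: m_def)
  next
    case False
    have "\<forall>t. Suc t < length xs \<longrightarrow> h (xs!t) + \<epsilon> \<le> h (xs!Suc t)"
      using bad e by (metis linorder_not_le less_eq_real_def add.commute le_diff_eq)
    from chain_ge[OF this, of m] False have "h (xs!0) + real m * \<epsilon> \<le> h (xs!m)"
      by (simp add: m_def)
    moreover have "h (xs!m) - h (xs!0) \<le> real n" using range False
      by (simp add: m_def)
    ultimately show ?thesis by simp
  qed
  have len: "length xs \<le> 2^n"
  proof -
    have "distinct xs" unfolding distinct_conv_nth
      using chain_strict[OF inc] by (metis less_irrefl nat_neq_iff)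
    then have "length xs = card (set xs)" by (simp add: distinct_card)
    also have "\<dots> \<le> card (Pow {..<n})" using sub by (intro card_mono) auto
    also have "\<dots> = 2^n" by (simp add: card_Pow)
    finally show ?thesis .
  qed
  then have "m \<le> 2^n - 1" unfolding m_def by simp
  then have "real m \<le> real (2^n - 1)" by (simp only: of_nat_le_iff)
  moreover have "real (2^n - 1 :: nat) = 2^n - 1"
    using one_le_power[of "2::nat" n] by (simp add: of_nat_diff)
  ultimately have mle: "real m \<le> 2^n - 1" by simp
  define S where "S = (\<Sum>j\<in>{1..n}. real n * 2^(j+1) * (if Bd (1/2^j) then 1 else 0))"
  have Snn: "0 \<le> S" unfolding S_def by (intro sum_nonneg) auto
  define J where "J = {j\<in>{1..n}. Bd (1/2^j)}"
  show ?thesis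
  proof (cases "J = {}")
    case True
    show ?thesis
    proof (cases "n = 0")
      case True then show ?thesis using mle Snn by (simp add: m_def)
    next
      case False
      then have "1 \<in> {1..n}" by simp
      then have "\<not> Bd (1/2^1)" using \<open>J = {}\<close> unfolding J_def by blast
      from key[OF _ this] have "real m * (1/2) \<le> real n" by simp
      then show ?thesis unfolding S_def[symmetric] m_def[symmetric] using Snn by linarith
    qed
  next
    case False
    define j where "j = Max J"
    have finJ: "finite J" unfolding J_def by auto
    have jJ: "j \<in> J" unfolding j_def using Max_in[OF finJ False] .
    then have j1: "1 \<le> j" "j \<le> n" "Bd (1/2^j)" unfolding J_def by auto
    have "real n * 2^(j+1) * (if Bd (1/2^j) then 1 else 0) \<le> S"
      unfolding S_def using j1 by (intro member_le_sum) auto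
    then have termS: "real n * 2^(j+1) \<le> S" using j1 by simp
    have "real m \<le> real n * 2^(j+1)"
    proof (cases "j < n")
      case True
      have "j + 1 \<notin> J" using Max_ge[OF finJ, of "j+1"] unfolding j_def by auto
      then have "\<not> Bd (1/2^(j+1))" using True j1 unfolding J_def by auto
      from key[OF _ this] have "real m * (1/2^(j+1)) \<le> real n" by simp
      then show ?thesis by (simp add: field_simps)
    next
      case False
      then have "j = n" using j1 by simp
      have n1: "1 \<le> real n" using j1 by simp
      have "(2::real)^n \<le> 2^(n+1)" by simp
      also have "\<dots> \<le> real n * 2^(n+1)" using n1 by simp
      finally have A: "(2::real)^n \<le> real n * 2^(n+1)" .
      show ?thesis unfolding \<open>j = n\<close> using mle A by linarith
    qed
    then show ?thesis using termS unfolding S_def[symmetric] m_def by simp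
  qed
qed

definition Xset :: "nat \<Rightarrow> (nat \<times> bool) option set" where
  "Xset n = insert None (Some ` ({..<n} \<times> UNIV))"

definition Gset :: "nat \<Rightarrow> nat \<Rightarrow> (nat \<Rightarrow> (nat \<times> bool) option) set" where
  "Gset n k = PiE {..<k} (\<lambda>_. Xset n)"

definition Pg :: "nat \<Rightarrow> (nat \<Rightarrow> (nat \<times> bool) option) \<Rightarrow> bool \<Rightarrow> nat set" where
  "Pg k g b = {i. \<exists>j<k. g j = Some (i, b)}"

lemma card_Xset: "card (Xset n) = 2 * n + 1"
proof -
  have "card (Some ` ({..<n} \<times> (UNIV::bool set))) = card ({..<n} \<times> (UNIV::bool set))"
    by (rule card_image) auto
  also have "\<dots> = 2 * n" by (simp add: card_cartesian_product)
  finally show ?thesis unfolding Xset_def by (subst card_insert_disjoint) auto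
qed

lemma fin_Xset: "finite (Xset n)" unfolding Xset_def by auto

lemma card_Gset: "card (Gset n k) = (2 * n + 1) ^ k"
  unfolding Gset_def by (simp add: card_PiE fin_Xset card_Xset)

lemma fin_Gset: "finite (Gset n k)"
  unfolding Gset_def by (simp add: finite_PiE fin_Xset)

lemma Pg_sub: "g \<in> Gset n k \<Longrightarrow> Pg k g b \<subseteq> {..<n}"
  unfolding Gset_def Pg_def Xset_def by (auto simp: PiE_def Pi_def)

lemma Pg_repr:
  assumes "P \<subseteq> {..<n}" "Q \<subseteq> {..<n}" "card P + card Q \<le> k"
  shows "\<exists>g\<in>Gset n k. Pg k g True = P \<and> Pg k g False = Q"
proof -
  have fin: "finite P" "finite Q" using assms finite_subset by auto
  define xs where "xs = map (\<lambda>i. Some (i, True)) (sorted_list_of_set P) @ map (\<lambda>i. Some (i, False)) (sorted_list_of_set Q)"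
  have lxs: "length xs \<le> k" unfolding xs_def using assms(3) by simp
  have setxs: "set xs = Some ` (P \<times> {True}) \<union> Some ` (Q \<times> {False})"
    unfolding xs_def using fin by auto
  define g where "g = (\<lambda>j. if j < k then (if j < length xs then xs ! j else None) else undefined)"
  have mem: "(\<exists>j<k. g j = Some x) \<longleftrightarrow> Some x \<in> set xs" for x
  proof
    assume "\<exists>j<k. g j = Some x"
    then obtain j where "j < k" "g j = Some x" by blast
    then show "Some x \<in> set xs" unfolding g_def by (auto split: if_splits) (metis nth_mem)
  next
    assume "Some x \<in> set xs"
    then obtain j where "j < length xs" "xs ! j = Some x" by (auto simp: in_set_conv_nth)
    then show "\<exists>j<k. g j = Some x" using lxs unfolding g_def by (intro exI[of _ j]) auto
  qed
  have "g \<in> Gset n k"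
    unfolding Gset_def
  proof (rule PiE_I)
    fix j assume "j \<in> {..<k}"
    show "g j \<in> Xset n"
    proof (cases "j < length xs")
      case True
      then have "xs ! j \<in> set xs" by simp
      then show ?thesis using \<open>j \<in> {..<k}\<close> assms(1,2) unfolding g_def setxs Xset_def using True by auto
    qed (use \<open>j \<in> {..<k}\<close> in \<open>auto simp: g_def Xset_def\<close>)
  qed (auto simp: g_def)
  moreover have "Pg k g True = P" "Pg k g False = Q"
    unfolding Pg_def mem setxs by auto
  ultimately show ?thesis by blast
qed

definition Bad :: "nat \<Rightarrow> nat \<Rightarrow> (nat \<Rightarrow> real \<Rightarrow> real) \<Rightarrow> real \<Rightarrow> (nat \<Rightarrow> real) set" where
  "Bad n k f \<epsilon> = (\<Union>g\<in>Gset n k. {w \<in> space (smoothed_weights n f).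
      0 < sum w (Pg k g True) - sum w (Pg k g False) \<and> sum w (Pg k g True) - sum w (Pg k g False) \<le> \<epsilon>})"

lemma Bad_sets: "Bad n k f \<epsilon> \<in> sets (smoothed_weights n f)"
  unfolding Bad_def using fin_Gset Pg_sub ev_sets by (intro sets.finite_UN) auto

lemma Bad_bound:
  assumes "\<forall>i<n. bounded_density \<phi> (f i)" "0 \<le> \<epsilon>"
  shows "emeasure (smoothed_weights n f) (Bad n k f \<epsilon>) \<le> of_nat ((2*n+1)^k) * ennreal (\<phi> * \<epsilon>)"
proof -
  have "emeasure (smoothed_weights n f) (Bad n k f \<epsilon>) \<le> (\<Sum>g\<in>Gset n k. emeasure (smoothed_weights n f) {w \<in> space (smoothed_weights n f).
      0 < sum w (Pg k g True) - sum w (Pg k g False) \<and> sum w (Pg k g True) - sum w (Pg k g False) \<le> \<epsilon>})"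
    unfolding Bad_def using fin_Gset Pg_sub ev_sets by (intro emeasure_subadditive_finite) auto
  also have "\<dots> \<le> (\<Sum>g\<in>Gset n k. ennreal (\<phi> * \<epsilon>))"
    using Pg_sub event_bound[OF assms(1) _ _ assms(2)] by (intro sum_mono) auto
  also have "\<dots> = of_nat ((2*n+1)^k) * ennreal (\<phi> * \<epsilon>)" by (simp add: card_Gset)
  finally show ?thesis .
qed

lemma sum_diff_sets:
  fixes w :: "nat \<Rightarrow> real"
  assumes "finite S" "finite T"
  shows "sum w T - sum w S = sum w (T - S) - sum w (S - T)"
proof -
  have "sum w T = sum w (T - S) + sum w (T \<inter> S)"
    using assms by (metis add.commute sum.Int_Diff)
  moreover have "sum w S = sum w (S - T) + sum w (T \<inter> S)"
    using assms by (metis add.commute sum.Int_Diff inf_commute)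
  ultimately show ?thesis by simp
qed

lemma card_symdiff: "finite S \<Longrightarrow> finite T \<Longrightarrow> card (symdiff S T) = card (S - T) + card (T - S)"
  unfolding symdiff_def by (rule card_Un_disjoint) auto

lemma sum01:
  fixes w :: "nat \<Rightarrow> real"
  assumes "\<forall>i<n. 0 \<le> w i \<and> w i \<le> 1" "S \<subseteq> {..<n}"
  shows "0 \<le> sum w S" "sum w S \<le> real n"
proof -
  show "0 \<le> sum w S" using assms by (intro sum_nonneg) auto
  have fin: "finite S" using assms(2) finite_subset by auto
  have "sum w S \<le> sum (\<lambda>_. 1) S" using assms by (intro sum_mono) auto
  also have "\<dots> = real (card S)" by simp
  also have "\<dots> \<le> real n" using card_mono[OF _ assms(2)] by simp
  finally show "sum w S \<le> real n" .
qed

lemma maxit_le: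
  fixes b :: bool and w :: "nat \<Rightarrow> real"
  assumes feas_sub: "\<And>S. feas S \<Longrightarrow> S \<subseteq> {..<n}"
    and better: "\<And>T S. better T S \<longleftrightarrow> (if b then sum w S else - sum w S) < (if b then sum w T else - sum w T)"
    and w01: "\<forall>i<n. 0 \<le> w i \<and> w i \<le> 1" and wsp: "w \<in> space (smoothed_weights n f)"
  shows "max_iterations feas better k \<le> ennreal (2*real n) +
           (\<Sum>j\<in>{1..n}. ennreal (real n * 2^(j+1)) * indicator (Bad n k f (1/2^j)) w)"
  unfolding max_iterations_def
proof (rule SUP_least)
  define h where "h = (\<lambda>S. if b then sum w S else - sum w S)"
  fix xs assume "xs \<in> Collect (improving_seq feas better k)"
  then have imp: "improving_seq feas better k xs" by simp
  have sub: "\<forall>S\<in>set xs. S \<subseteq> {..<n}" using imp feas_sub unfolding improving_seq_def by blast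
  have inc: "\<forall>t. Suc t < length xs \<longrightarrow> h (xs!t) < h (xs!Suc t)"
    using imp better unfolding improving_seq_def h_def by blast
  have gain: "\<exists>g\<in>Gset n k. h T - h S = sum w (Pg k g True) - sum w (Pg k g False)"
    if "S \<subseteq> {..<n}" "T \<subseteq> {..<n}" "card (symdiff S T) \<le> k" for S T
  proof -
    have fin: "finite S" "finite T" using that finite_subset by auto
    define P where "P = (if b then T - S else S - T)"
    define Q where "Q = (if b then S - T else T - S)"
    have "card P + card Q \<le> k" using that card_symdiff[OF fin] unfolding P_def Q_def by auto
    moreover have "P \<subseteq> {..<n}" "Q \<subseteq> {..<n}" using that unfolding P_def Q_def by auto
    ultimately obtain g where g: "g \<in> Gset n k" "Pg k g True = P" "Pg k g False = Q"
      using Pg_repr by blast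
    have "h T - h S = sum w P - sum w Q"
      using sum_diff_sets[OF fin, of w] unfolding h_def P_def Q_def by auto
    then show ?thesis using g by auto
  qed
  have bad: "\<forall>t \<epsilon>. Suc t < length xs \<longrightarrow> h (xs!Suc t) - h (xs!t) \<le> \<epsilon> \<longrightarrow> w \<in> Bad n k f \<epsilon>"
  proof (intro allI impI)
    fix t \<epsilon> assume t: "Suc t < length xs" and le: "h (xs!Suc t) - h (xs!t) \<le> \<epsilon>"
    have "xs!t \<in> set xs" "xs!Suc t \<in> set xs" using t by auto
    moreover have "card (symdiff (xs!t) (xs!Suc t)) \<le> k" using imp t unfolding improving_seq_def by blast
    ultimately obtain g where g: "g \<in> Gset n k"
      "h (xs!Suc t) - h (xs!t) = sum w (Pg k g True) - sum w (Pg k g False)"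
      using gain sub by blast
    have "0 < h (xs!Suc t) - h (xs!t)" using inc t by auto
    then show "w \<in> Bad n k f \<epsilon>" unfolding Bad_def using g le wsp by auto
  qed
  have range: "\<forall>S\<in>set xs. \<forall>T\<in>set xs. h T - h S \<le> real n"
    using sub sum01[OF w01] unfolding h_def by (auto; smt (verit) sum01[OF w01])
  from steps_bound[OF sub inc bad range]
  have R: "real (length xs - 1) \<le> 2 * real n + (\<Sum>j\<in>{1..n}. real n * 2^(j+1) * (if w \<in> Bad n k f (1/2^j) then 1 else 0))" .
  have "of_nat (length xs - 1) = ennreal (real (length xs - 1))" by (rule ennreal_of_nat_eq_real_of_nat)
  also have "\<dots> \<le> ennreal (2 * real n + (\<Sum>j\<in>{1..n}. real n * 2^(j+1) * (if w \<in> Bad n k f (1/2^j) then 1 else 0)))"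
    using R by (rule ennreal_leI)
  also have "\<dots> = ennreal (2*real n) + (\<Sum>j\<in>{1..n}. ennreal (real n * 2^(j+1) * (if w \<in> Bad n k f (1/2^j) then 1 else 0)))"
    by (subst ennreal_plus) (auto intro!: sum_nonneg simp: sum_ennreal)
  also have "\<dots> = ennreal (2*real n) + (\<Sum>j\<in>{1..n}. ennreal (real n * 2^(j+1)) * indicator (Bad n k f (1/2^j)) w)"
    by (intro arg_cong2[where f="(+)"] refl sum.cong) (auto split: split_indicator)
  finally show "of_nat (length xs - 1) \<le> ennreal (2*real n) +
           (\<Sum>j\<in>{1..n}. ennreal (real n * 2^(j+1)) * indicator (Bad n k f (1/2^j)) w)" .
qed

lemma AE01:
  assumes bd: "\<forall>i<n. bounded_density \<phi> (f i)"
  shows "AE w in smoothed_weights n f. \<forall>i<n. 0 \<le> w i \<and> w i \<le> 1"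
proof -
  have "AE w in smoothed_weights n f. \<forall>i\<in>{..<n}. 0 \<le> w i \<and> w i \<le> 1"
  proof (rule AE_finite_allI)
    fix i assume i: "i \<in> {..<n}"
    have "AE x in Mfam n f i. 0 \<le> x \<and> x \<le> 1"
    proof -
      have z: "\<forall>x. 0 < f i x \<longrightarrow> 0 \<le> x \<and> x \<le> 1"
        using bd i unfolding bounded_density_def by (metis atLeastAtMost_iff less_irrefl lessThan_iff)
      have "AE x in density lborel (\<lambda>x. ennreal (f i x)). 0 \<le> x \<and> x \<le> 1"
        using bd_meas[of \<phi> "f i"] bd i z
        by (subst AE_density) (auto intro!: AE_I2)
      moreover have eq: "Mfam n f i = density lborel (\<lambda>x. ennreal (f i x))" using i by (simp add: Mfam_def)
      ultimately show ?thesis by (simp only: eq)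
    qed
    then show "AE w in smoothed_weights n f. 0 \<le> w i \<and> w i \<le> 1"
      unfolding SW_eq using i Mfam_prob[OF bd] by (intro AE_PiM_component) auto
  qed simp
  then show ?thesis by (rule eventually_mono) auto
qed

lemma integral_bound:
  fixes F :: "(nat \<Rightarrow> real) \<Rightarrow> ennreal"
  assumes bd: "\<forall>i<n. bounded_density \<phi> (f i)"
    and ptw: "\<And>w. w \<in> space (smoothed_weights n f) \<Longrightarrow> \<forall>i<n. 0 \<le> w i \<and> w i \<le> 1 \<Longrightarrow>
       F w \<le> ennreal (2*real n) + (\<Sum>j\<in>{1..n}. ennreal (real n * 2^(j+1)) * indicator (Bad n k f (1/2^j)) w)"
  shows "(\<integral>\<^sup>+ w. F w \<partial>smoothed_weights n f) \<le> ennreal (4 * 3 ^ k * real n ^ (k + 2) * \<phi>)"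
proof -
  let ?M = "smoothed_weights n f"
  interpret PS: prob_space ?M unfolding SW_eq using Mfam_prob[OF bd] by (intro prob_space_PiM) auto
  have "(\<integral>\<^sup>+ w. F w \<partial>?M) \<le> (\<integral>\<^sup>+ w. ennreal (2*real n) + (\<Sum>j\<in>{1..n}. ennreal (real n * 2^(j+1)) * indicator (Bad n k f (1/2^j)) w) \<partial>?M)"
    apply (rule nn_integral_mono_AE)
    using AE01[OF bd] AE_space[of ?M] by eventually_elim (rule ptw)
  also have "\<dots> = (\<integral>\<^sup>+ w. ennreal (2*real n) \<partial>?M) + (\<integral>\<^sup>+ w. (\<Sum>j\<in>{1..n}. ennreal (real n * 2^(j+1)) * indicator (Bad n k f (1/2^j)) w) \<partial>?M)"
  proof (rule nn_integral_add)
    note Bad_sets[measurable]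
    show "(\<lambda>w. \<Sum>j\<in>{1..n}. ennreal (real n * 2^(j+1)) * indicator (Bad n k f (1/2^j)) w) \<in> borel_measurable ?M"
      by measurable
  qed simp
  also have "\<dots> = ennreal (2*real n) + (\<Sum>j\<in>{1..n}. ennreal (real n * 2^(j+1)) * emeasure ?M (Bad n k f (1/2^j)))"
  proof -
    note Bad_sets[measurable]
    have "(\<integral>\<^sup>+ w. (\<Sum>j\<in>{1..n}. ennreal (real n * 2^(j+1)) * indicator (Bad n k f (1/2^j)) w) \<partial>?M)
       = (\<Sum>j\<in>{1..n}. (\<integral>\<^sup>+ w. ennreal (real n * 2^(j+1)) * indicator (Bad n k f (1/2^j)) w \<partial>?M))"
      by (rule nn_integral_sum) measurable
    also have "\<dots> = (\<Sum>j\<in>{1..n}. ennreal (real n * 2^(j+1)) * emeasure ?M (Bad n k f (1/2^j)))"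
      by (intro sum.cong refl nn_integral_cmult_indicator Bad_sets)
    moreover have "(\<integral>\<^sup>+ w. ennreal (2*real n) \<partial>?M) = ennreal (2*real n)"
      by (simp add: PS.emeasure_space_1)
    ultimately show ?thesis by (simp only:)
  qed
  also have "\<dots> \<le> ennreal (4 * 3 ^ k * real n ^ (k + 2) * \<phi>)"
  proof (cases "n = 0")
    case True then show ?thesis by simp
  next
    case False
    then have n1: "1 \<le> real n" by simp
    have phi: "1 \<le> \<phi>" using bd bd_phi False by blast
    have hterm: "ennreal (real n * 2^(j+1)) * emeasure ?M (Bad n k f (1/2^j)) \<le> ennreal (2 * real n * (2*real n+1)^k * \<phi>)" for j
    proof -
      have "ennreal (real n * 2^(j+1)) * emeasure ?M (Bad n k f (1/2^j))
          \<le> ennreal (real n * 2^(j+1)) * (of_nat ((2*n+1)^k) * ennreal (\<phi> * (1/2^j)))"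
        by (intro mult_left_mono Bad_bound bd) auto
      also have "\<dots> = ennreal (real n * 2^(j+1) * (real ((2*n+1)^k) * (\<phi> * (1/2^j))))"
      proof -
        have p: "0 \<le> \<phi> * (1/2^j)" using phi by simp
        have "of_nat ((2*n+1)^k) * ennreal (\<phi> * (1/2^j)) = ennreal (real ((2*n+1)^k) * (\<phi> * (1/2^j)))"
          using ennreal_mult[OF of_nat_0_le_iff p] ennreal_of_nat_eq_real_of_nat by metis
        moreover have "ennreal (real n * 2^(j+1)) * ennreal (real ((2*n+1)^k) * (\<phi> * (1/2^j)))
           = ennreal (real n * 2^(j+1) * (real ((2*n+1)^k) * (\<phi> * (1/2^j))))"
        proof -
          have p2: "0 \<le> real ((2*n+1)^k) * (\<phi> * (1/2^j))" using p by (rule mult_nonneg_nonneg[OF of_nat_0_le_iff])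
          have p3: "0 \<le> real n * 2^(j+1)" by simp
          show ?thesis using ennreal_mult[OF p3 p2] by simp
        qed
        ultimately show ?thesis by metis
      qed
      also have "real n * 2^(j+1) * (real ((2*n+1)^k) * (\<phi> * (1/2^j))) = 2 * real n * (2*real n+1)^k * \<phi>"
        by (simp add: field_simps)
      finally show ?thesis .
    qed
    have "ennreal (2*real n) + (\<Sum>j\<in>{1..n}. ennreal (real n * 2^(j+1)) * emeasure ?M (Bad n k f (1/2^j)))
        \<le> ennreal (2*real n) + (\<Sum>j\<in>{1..n}. ennreal (2 * real n * (2*real n+1)^k * \<phi>))"
      by (intro add_left_mono sum_mono hterm)
    also have "\<dots> = ennreal (2*real n + real n * (2 * real n * (2*real n+1)^k * \<phi>))"
    proof -
      define c where "c = 2 * real n * (2*real n+1)^k * \<phi>"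
      have c0: "0 \<le> c" unfolding c_def using phi by simp
      have "(\<Sum>j\<in>{1..n}. ennreal c) = ennreal (\<Sum>j\<in>{1..n}. c)"
        using c0 by (rule sum_ennreal)
      also have "(\<Sum>j\<in>{1..n}. c) = real n * c" by simp
      finally have "ennreal (2*real n) + (\<Sum>j\<in>{1..n}. ennreal c) = ennreal (2*real n) + ennreal (real n * c)"
        by simp
      also have "\<dots> = ennreal (2*real n + real n * c)"
        using c0 by (intro ennreal_plus[symmetric]) auto
      finally show ?thesis unfolding c_def .
    qed
    also have "\<dots> \<le> ennreal (4 * 3 ^ k * real n ^ (k + 2) * \<phi>)"
    proof (rule ennreal_leI)
      have a: "(2*real n+1)^k \<le> (3 * real n)^k" using n1 by (intro power_mono) auto
      have b: "real n \<le> real n ^ (k+2)" using n1 by (intro self_le_power) auto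
      have c: "(1::real) \<le> 3^k" by simp
      have "2 * real n \<le> 2 * (3^k * real n^(k+2) * \<phi>)"
      proof -
        have "real n * 1 * 1 \<le> real n^(k+2) * 3^k * \<phi>"
          using b c phi n1 by (intro mult_mono) auto
        then show ?thesis by (simp add: algebra_simps)
      qed
      moreover have "real n * (2 * real n * (2*real n+1)^k * \<phi>) \<le> 2 * (3^k * real n^(k+2) * \<phi>)"
      proof -
        have "real n * (2 * real n * (2*real n+1)^k * \<phi>) = 2 * (real n * real n * (2*real n+1)^k * \<phi>)" by simp
        also have "\<dots> \<le> 2 * (real n * real n * (3 * real n)^k * \<phi>)"
          using a phi n1 by (intro mult_left_mono mult_right_mono) auto
        also have "\<dots> = 2 * (3^k * real n^(k+2) * \<phi>)" by (simp add: power_mult_distrib power_add power2_eq_square)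
        finally show ?thesis .
      qed
      moreover have "4 * 3 ^ k * real n ^ (k + 2) * \<phi> = 4 * (3^k * real n^(k+2) * \<phi>)" by simp
      ultimately show "2*real n + real n * (2 * real n * (2*real n+1)^k * \<phi>) \<le> 4 * 3 ^ k * real n ^ (k + 2) * \<phi>"
        by linarith
    qed
    finally show ?thesis .
  qed
  finally show ?thesis .
qed

theorem mainTheorem15:
  shows "\<exists>c::real. c > 0 \<and>
    (\<forall>(B::nat set) (C::nat \<Rightarrow> nat set) n k q \<phi> f.
       finite B \<and> card B = 3 * q \<and> (\<forall>i<n. C i \<subseteq> B \<and> card (C i) = 3) \<and>
       (\<forall>i<n. bounded_density \<phi> (f i)) \<longrightarrow>
       (\<integral>\<^sup>+ w. max_iterations (x3c_feasible B C n q) (x3c_better w) k \<partial>smoothed_weights n f)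
         \<le> ennreal (c * 3 ^ k * real n ^ (k + 2) * \<phi>)) \<and>
    (\<forall>(B::nat set) (C::nat \<Rightarrow> nat set) n k \<phi> f.
       finite B \<and> (\<forall>i<n. C i \<subseteq> B) \<and>
       (\<forall>i<n. bounded_density \<phi> (f i)) \<longrightarrow>
       (\<integral>\<^sup>+ w. max_iterations (sc_feasible B C n) (sc_better w) k \<partial>smoothed_weights n f)
         \<le> ennreal (c * 3 ^ k * real n ^ (k + 2) * \<phi>))"
proof (intro exI[of _ 4] conjI allI impI)
  show "(0::real) < 4" by simp
next
  fix B :: "nat set" and C :: "nat \<Rightarrow> nat set" and n k q \<phi> and f :: "nat \<Rightarrow> real \<Rightarrow> real"
  assume a: "finite B \<and> card B = 3 * q \<and> (\<forall>i<n. C i \<subseteq> B \<and> card (C i) = 3) \<and>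
       (\<forall>i<n. bounded_density \<phi> (f i))"
  then have bd: "\<forall>i<n. bounded_density \<phi> (f i)" by blast
  show "(\<integral>\<^sup>+ w. max_iterations (x3c_feasible B C n q) (x3c_better w) k \<partial>smoothed_weights n f)
         \<le> ennreal (4 * 3 ^ k * real n ^ (k + 2) * \<phi>)"
  proof (rule integral_bound[OF bd])
    fix w :: "nat \<Rightarrow> real" assume "w \<in> space (smoothed_weights n f)" "\<forall>i<n. 0 \<le> w i \<and> w i \<le> 1"
    then show "max_iterations (x3c_feasible B C n q) (x3c_better w) k \<le> ennreal (2*real n) +
           (\<Sum>j\<in>{1..n}. ennreal (real n * 2^(j+1)) * indicator (Bad n k f (1/2^j)) w)"
      by (intro maxit_le[where b=True]) (auto simp: x3c_feasible_def x3c_better_def)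
  qed
next
  fix B :: "nat set" and C :: "nat \<Rightarrow> nat set" and n k \<phi> and f :: "nat \<Rightarrow> real \<Rightarrow> real"
  assume a: "finite B \<and> (\<forall>i<n. C i \<subseteq> B) \<and> (\<forall>i<n. bounded_density \<phi> (f i))"
  then have bd: "\<forall>i<n. bounded_density \<phi> (f i)" by blast
  show "(\<integral>\<^sup>+ w. max_iterations (sc_feasible B C n) (sc_better w) k \<partial>smoothed_weights n f)
         \<le> ennreal (4 * 3 ^ k * real n ^ (k + 2) * \<phi>)"
  proof (rule integral_bound[OF bd])
    fix w :: "nat \<Rightarrow> real" assume "w \<in> space (smoothed_weights n f)" "\<forall>i<n. 0 \<le> w i \<and> w i \<le> 1"
    then show "max_iterations (sc_feasible B C n) (sc_better w) k \<le> ennreal (2*real n) +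
           (\<Sum>j\<in>{1..n}. ennreal (real n * 2^(j+1)) * indicator (Bad n k f (1/2^j)) w)"
      by (intro maxit_le[where b=False]) (auto simp: sc_feasible_def sc_better_def)
  qed
qed

end
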